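(* Let $A$ be a finite set of alternatives, let ${\mathcal D}\subseteq {\mathcal L}(A)$ be a Condorcet domain, and let $a,b,c\in A$ be distinct. Suppose ${\mathcal D}$ contains a linear order $w=\ldots bc\ldots a\ldots$ in which $b$ immediately precedes $c$ and $a$ is ranked below $c$. Then $a$ is a right obstruction to the swap $bc\to cb$ if and only if ${\mathcal D}|_{\{a,b,c\}}$ satisfies $cN_{\{a,b,c\}}1$ or $bN_{\{a,b,c\}}2$ (or both), and satisfies no other never condition.
   Context: ${\mathcal L}(A)$ denotes the set of all linear orders on $A$; a linear order is written as a word listing alternatives from most preferred to least preferred. For ${\mathcal D}\subseteq{\mathcal L}(A)$ and $T\subseteq A$, the restriction ${\mathcal D}|_T$ is the set of restrictions to $T$ of the orders in ${\mathcal D}$. For a triple $T$, $x\in T$ and $i\in\{1,2,3\}$, the never condition $xN_T i$ says that in every order of ${\mathcal D}|_T$ the alternative $x$ is not in position $i$ (position 1 = top, 3 = bottom). A domain ${\mathcal D}$ is a Condorcet domain if for every triple $T\subseteq A$ the restriction ${\mathcal D}|_T$ satisfies at least one never condition (equivalently, every profile of orders from ${\mathcal D}$ with an odd number of voters has a transitive majority relation); a set of orders on a triple is Condorcet if it satisfies at least one never condition. Right obstruction: in an order $w=\ldots bc\ldots a\ldots\in{\mathcal D}$ (with $b$ immediately followed by $c$, and $a$ ranked below them), the alternative $a$ is a right obstruction to the swap $bc\to cb$ if ${\mathcal D}|_{\{a,b,c\}}\cup\{cba\}$ is not Condorcet. *)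

theory Defs
  imports Main
begin

text \<open>A linear order on A is represented as a list listing the alternatives
  from most preferred (head) to least preferred; it contains each element of A exactly once.\<close>
definition linorder_on :: "'a set \<Rightarrow> 'a list \<Rightarrow> bool" where
  "linorder_on A w \<longleftrightarrow> distinct w \<and> set w = A"

definition lin_orders :: "'a set \<Rightarrow> 'a list set" where
  "lin_orders A = {w. linorder_on A w}"

definition restr :: "'a set \<Rightarrow> 'a list \<Rightarrow> 'a list" where
  "restr T w = filter (\<lambda>x. x \<in> T) w"

definition restr_dom :: "'a list set \<Rightarrow> 'a set \<Rightarrow> 'a list set" where
  "restr_dom D T = restr T ` D"

text \<open>Position of x in w, 1-based (1 = top).\<close>
definition pos :: "'a list \<Rightarrow> 'a \<Rightarrow> nat" where
  "pos w x = Suc (LEAST k. k < length w \<and> w ! k = x)"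

definition never :: "'a list set \<Rightarrow> 'a \<Rightarrow> nat \<Rightarrow> bool" where
  "never S x i \<longleftrightarrow> (\<forall>w\<in>S. pos w x \<noteq> i)"

definition is_triple :: "'a set \<Rightarrow> bool" where
  "is_triple T \<longleftrightarrow> card T = 3"

definition condorcet_on_triple :: "'a set \<Rightarrow> 'a list set \<Rightarrow> bool" where
  "condorcet_on_triple T S \<longleftrightarrow> (\<exists>x\<in>T. \<exists>i\<in>{1,2,3}. never S x i)"

definition condorcet_domain :: "'a set \<Rightarrow> 'a list set \<Rightarrow> bool" where
  "condorcet_domain A D \<longleftrightarrow> D \<subseteq> lin_orders A \<and>
     (\<forall>T. T \<subseteq> A \<longrightarrow> is_triple T \<longrightarrow> condorcet_on_triple T (restr_dom D T))"

text \<open>Right obstruction: a is a right obstruction to the swap bc -> cb (in the presence of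
  an order w = ...bc...a... in D) if D|{a,b,c} together with cba is not Condorcet.\<close>
definition right_obstruction :: "'a list set \<Rightarrow> 'a \<Rightarrow> 'a \<Rightarrow> 'a \<Rightarrow> bool" where
  "right_obstruction D a b c \<longleftrightarrow>
     \<not> condorcet_on_triple {a,b,c} (restr_dom D {a,b,c} \<union> {[c,b,a]})"

end

theory Submission
  imports Defs
begin

lemma pos_nth:
  assumes "distinct w" "k < length w"
  shows "pos w (w ! k) = Suc k"
  unfolding pos_def
proof -
  have "(LEAST j. j < length w \<and> w ! j = w ! k) = k"
    by (rule Least_equality) (use assms nth_eq_iff_index_eq in \<open>auto simp: not_le\<close>)
  then show "Suc (LEAST j. j < length w \<and> w ! j = w ! k) = Suc k" by simp
qed

lemma pos_cba:
  assumes "a \<noteq> b" "b \<noteq> c" "a \<noteq> c"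
  shows "pos [c,b,a] c = 1" "pos [c,b,a] b = 2" "pos [c,b,a] a = 3"
    "pos [b,c,a] a = 3"
proof -
  have d: "distinct [c,b,a]" "distinct [b,c,a]" using assms by auto
  show "pos [c,b,a] c = 1" using pos_nth[OF d(1), of 0] by simp
  show "pos [c,b,a] b = 2" using pos_nth[OF d(1), of 1] by simp
  show "pos [c,b,a] a = 3" using pos_nth[OF d(1), of 2] by (simp add: numeral_eq_Suc)
  show "pos [b,c,a] a = 3" using pos_nth[OF d(2), of 2] by (simp add: numeral_eq_Suc)
qed

lemma filter_single:
  assumes "distinct v" "a \<in> set v" "\<forall>x\<in>set v. x \<in> T \<longrightarrow> x = a" "a \<in> T"
  shows "filter (\<lambda>x. x \<in> T) v = [a]"
proof -
  define xs where "xs = filter (\<lambda>x. x \<in> T) v"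
  have d: "distinct xs" using assms(1) unfolding xs_def by simp
  have s1: "set xs = {x \<in> set v. x \<in> T}" unfolding xs_def by simp
  have s: "set xs = {a}"
    unfolding s1 using assms(2,3,4) by blast
  have "length xs = Suc 0" using distinct_card[OF d] s by simp
  then obtain y where y: "xs = [y]" by (cases xs) auto
  then have "y = a" using s by simp
  then show ?thesis using y unfolding xs_def by simp
qed

theorem proposition1:
  fixes A :: "'a set" and D :: "'a list set" and a b c :: 'a and w :: "'a list"
  assumes "finite A"
    and "condorcet_domain A D"
    and "a \<in> A" "b \<in> A" "c \<in> A"
    and "a \<noteq> b" "b \<noteq> c" "a \<noteq> c"
    and "w \<in> D"
    and "\<exists>u v. w = u @ [b, c] @ v \<and> a \<in> set v"
  shows "right_obstruction D a b c \<longleftrightarrow>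
           ((never (restr_dom D {a,b,c}) c 1 \<or> never (restr_dom D {a,b,c}) b 2) \<and>
            (\<forall>x\<in>{a,b,c}. \<forall>i\<in>{1,2,3::nat}.
               never (restr_dom D {a,b,c}) x i \<longrightarrow> (x = c \<and> i = 1) \<or> (x = b \<and> i = 2)))"
proof -
  define T where "T = {a,b,c}"
  define S where "S = restr_dom D T"
  obtain u v where uv: "w = u @ [b, c] @ v" "a \<in> set v" using assms(10) by blast
  have dw: "distinct w" using assms(2,9) unfolding condorcet_domain_def lin_orders_def linorder_on_def by auto
  have fu: "filter (\<lambda>x. x \<in> T) u = []"
  proof -
    have d2: "distinct (u @ b # c # v)" using dw uv(1) by simp
    then have "a \<notin> set u" "b \<notin> set u" "c \<notin> set u" using uv(2) by auto
    then show ?thesis unfolding T_def filter_empty_conv by blast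
  qed
  have fv: "filter (\<lambda>x. x \<in> T) v = [a]"
  proof (rule filter_single)
    have d2: "distinct (u @ b # c # v)" using dw uv(1) by simp
    then show "distinct v" by simp
    have "b \<notin> set v" "c \<notin> set v" using d2 by auto
    then show "\<forall>x\<in>set v. x \<in> T \<longrightarrow> x = a" unfolding T_def by blast
  qed (use uv(2) T_def in auto)
  have bcT: "b \<in> T" "c \<in> T" unfolding T_def by auto
  have rw: "restr T w = [b,c,a]" unfolding restr_def uv(1) using fu fv bcT by simp
  have bca: "[b,c,a] \<in> S" unfolding S_def restr_dom_def using rw assms(9) by force
  have pc: "pos [c,b,a] c = 1" "pos [c,b,a] b = 2" "pos [c,b,a] a = 3" "pos [b,c,a] a = 3"
    using pos_cba assms(6-8) by auto
  have condS: "condorcet_on_triple T S"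
  proof -
    have "T \<subseteq> A" unfolding T_def using assms(3-5) by simp
    moreover have "is_triple T" unfolding T_def is_triple_def using assms(6-8) by simp
    ultimately show ?thesis using assms(2) unfolding condorcet_domain_def S_def by blast
  qed
  have nevU: "never (S \<union> {[c,b,a]}) x i \<longleftrightarrow> never S x i \<and> pos [c,b,a] x \<noteq> i" for x i
    unfolding never_def by auto
  have ro: "right_obstruction D a b c \<longleftrightarrow> (\<forall>x\<in>T. \<forall>i\<in>{1,2,3::nat}. never S x i \<longrightarrow> pos [c,b,a] x = i)"
    unfolding right_obstruction_def condorcet_on_triple_def nevU T_def[symmetric] S_def[symmetric]
    by blast
  have na3: "\<not> never S a 3" using bca pc unfolding never_def by auto
  show ?thesis
    unfolding T_def[symmetric] S_def[symmetric] ro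
  proof
    assume H: "\<forall>x\<in>T. \<forall>i\<in>{1,2,3::nat}. never S x i \<longrightarrow> pos [c,b,a] x = i"
    have G: "never S x i \<Longrightarrow> x \<in> T \<Longrightarrow> i \<in> {1,2,3} \<Longrightarrow> (x = c \<and> i = 1) \<or> (x = b \<and> i = 2)" for x i
    proof -
      assume a1: "never S x i" "x \<in> T" "i \<in> {1,2,3}"
      then have "pos [c,b,a] x = i" using H by blast
      moreover have "x = a \<or> x = b \<or> x = c" using a1(2) unfolding T_def by blast
      ultimately show ?thesis using na3 pc a1(1) by auto
    qed
    obtain x i where xi: "x \<in> T" "i \<in> {1,2,3::nat}" "never S x i" using condS unfolding condorcet_on_triple_def by blast
    have "never S c 1 \<or> never S b 2" using G[OF xi(3,1,2)] xi(3) by auto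
    then show "(never S c 1 \<or> never S b 2) \<and> (\<forall>x\<in>T. \<forall>i\<in>{1,2,3::nat}. never S x i \<longrightarrow> x = c \<and> i = 1 \<or> x = b \<and> i = 2)"
      using G by simp
  next
    assume "(never S c 1 \<or> never S b 2) \<and> (\<forall>x\<in>T. \<forall>i\<in>{1,2,3::nat}. never S x i \<longrightarrow> x = c \<and> i = 1 \<or> x = b \<and> i = 2)"
    then show "\<forall>x\<in>T. \<forall>i\<in>{1,2,3::nat}. never S x i \<longrightarrow> pos [c,b,a] x = i"
      using pc by auto
  qed
qed

end
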